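(* Let $d=2$ and use polar coordinates $(r,\phi)$, $x^1=r\cos\phi$, $x^2=r\sin\phi$. Let $\Lambda\subset\mathbb{R}^2$ be bounded, the closure of an open connected set with piecewise smooth boundary, not containing the origin, and contained in the annulus $\{x:0<R_1<|x|<R_2<\infty\}$. Let $U$ be a smooth function on $(0,\infty)$ and $F(x)=-U'(|x|)\frac{x}{|x|}$. For $x\in\Lambda$ let $y(t,x)$ solve $\frac{d^2y}{dt^2}=F(y)$, $y(0,x)=x$, with initial velocity such that, writing $r(t,x),\phi(t,x)$ for the polar coordinates of $y(t,x)$, $$\frac{dr(0,x)}{dt}=g(|x|)>0,\qquad \frac{d\phi(0,x)}{dt}=h(|x|)$$ for some functions $g,h$ of $|x|$ only. Let $M(r)=r^2h(r)$ and assume that for all $r_2\ge r_1>R_1$, $$-U'(r_2)+\frac{M^2(r_1)}{r_2^3}\ge0.$$ Define $E_0(r)=\frac12g^2(r)+U(r)+\frac12r^2h^2(r)$ and $V(z,r)=U(z)+\frac{r^4h^2(r)}{2z^2}$. If for all $R_1<r_1<R_2$ and all $r_2>r_1$ $$\int_{r_1}^{r_2}\frac{d}{dr_1}\frac{1}{\sqrt{2(E_0(r_1)-V(z,r_1))}}\,dz<\frac{1}{g(r_1)},$$ then there are no collisions: $y(t,x_1)\ne y(t,x_2)$ for all $t\ge0$ and all $x_1\ne x_2$ in $\Lambda$.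
   Context: Each point of $\Lambda$ is a non-interacting unit-mass point particle moving in the central field $F$. *)

theory Defs
  imports "HOL-Analysis.Analysis"
begin

definition polar_pt :: "real \<Rightarrow> real \<Rightarrow> real^2" where
  "polar_pt r phi = vector [r * cos phi, r * sin phi]"

definition central_force :: "(real \<Rightarrow> real) \<Rightarrow> real^2 \<Rightarrow> real^2" where
  "central_force U x = (- deriv U (norm x) / norm x) *\<^sub>R x"

definition piecewise_smooth_boundary :: "(real^2) set \<Rightarrow> bool" where
  "piecewise_smooth_boundary S \<longleftrightarrow>
     (\<exists>P. finite P \<and> (\<forall>p\<in>P. p piecewise_C1_differentiable_on {0..1}) \<and>
          frontier S = (\<Union>p\<in>P. p ` {0..1}))"

definition E0 :: "(real \<Rightarrow> real) \<Rightarrow> (real \<Rightarrow> real) \<Rightarrow> (real \<Rightarrow> real) \<Rightarrow> real \<Rightarrow> real" where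
  "E0 U g h r = (g r)\<^sup>2 / 2 + U r + r\<^sup>2 * (h r)\<^sup>2 / 2"

definition Vpot :: "(real \<Rightarrow> real) \<Rightarrow> (real \<Rightarrow> real) \<Rightarrow> real \<Rightarrow> real \<Rightarrow> real" where
  "Vpot U h z r = U z + r ^ 4 * (h r)\<^sup>2 / (2 * z\<^sup>2)"

definition Mmom :: "(real \<Rightarrow> real) \<Rightarrow> real \<Rightarrow> real" where
  "Mmom h r = r\<^sup>2 * h r"

end

theory Submission
  imports Defs
begin



lemma times_zero_fun: "(*) (0::real) = (\<lambda>h. 0)" by auto

lemma at0_nonbot: "t \<ge> (0::real) \<Longrightarrow> at t within {0..} \<noteq> bot"
proof -
  assume "t \<ge> 0"
  have "t \<in> closure {t<..}" by simp
  moreover have "{t<..} \<subseteq> {0..} - {t}" using \<open>t \<ge> 0\<close> by auto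
  ultimately show ?thesis by (metis at_within_eq_bot_iff closure_mono subsetD)
qed

lemma comp_deriv:
  fixes f :: "real \<Rightarrow> real^2"
  assumes "(f has_vector_derivative v) F"
  shows "((\<lambda>t. f t $ i) has_real_derivative v $ i) F"
proof -
  have "((\<lambda>t. f t $ i) has_derivative (\<lambda>d. (d *\<^sub>R v) $ i)) F"
    using bounded_linear.has_derivative[OF bounded_linear_vec_nth assms[unfolded has_vector_derivative_def]] .
  moreover have "(\<lambda>d. (d *\<^sub>R v) $ i) = (*) (v $ i)" by (rule ext) simp
  ultimately show ?thesis by (simp add: has_field_derivative_def)
qed

lemma interior0: "t > (0::real) \<Longrightarrow> at t within {0..} = at t"
  by (rule at_within_interior) simp

lemma cont0:
  assumes "\<And>t. t \<ge> 0 \<Longrightarrow> (f has_real_derivative f' t) (at t within {0..})"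
  shows "continuous_on {0..} f"
  unfolding continuous_on_eq_continuous_within
  using assms DERIV_continuous by blast

lemma mono0:
  assumes d: "\<And>t. t \<ge> 0 \<Longrightarrow> (f has_real_derivative f' t) (at t within {0..})"
    and nn: "\<And>t. t \<ge> 0 \<Longrightarrow> f' t \<ge> 0" and "0 \<le> a" "a \<le> b"
  shows "f a \<le> f b"
proof (rule DERIV_nonneg_imp_increasing_open[OF \<open>a \<le> b\<close>])
  fix x assume "a < x" "x < b"
  then have "(f has_real_derivative f' x) (at x)" using d[of x] interior0[of x] \<open>0 \<le> a\<close> by auto
  then show "\<exists>y. (f has_real_derivative y) (at x) \<and> 0 \<le> y" using nn[of x] \<open>a < x\<close> \<open>0 \<le> a\<close> by auto
next
  have "continuous_on {0..} f" by (rule cont0[of f f']) (rule d)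
  then show "continuous_on {a..b} f" using \<open>0 \<le> a\<close>
    by (elim continuous_on_subset) auto
qed

lemma const0:
  assumes d: "\<And>t. t \<ge> 0 \<Longrightarrow> (f has_real_derivative 0) (at t within {0..})" and "t \<ge> 0"
  shows "f t = f (0::real)"
proof -
  have "(f has_derivative (\<lambda>h. 0)) (at x within {0..})" if "x \<in> {0..}" for x
    proof -
    have e: "(*) (0::real) = (\<lambda>h. 0)" by auto
    show ?thesis using d[of x] that by (simp add: has_field_derivative_def e)
  qed
  then show ?thesis
    using has_derivative_zero_unique[of "{0..}" f t 0] assms(2) by auto
qed




lemma particle:
  fixes Y1 Y2 V1 V2 U :: "real \<Rightarrow> real" and r0 g0 h0 p0 :: real
  defines "\<rho> \<equiv> \<lambda>t. sqrt (Y1 t ^ 2 + Y2 t ^ 2)"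
  defines "Q \<equiv> \<lambda>z. g0\<^sup>2 / 2 + U r0 + r0\<^sup>2 * h0\<^sup>2 / 2 - (U z + r0 ^ 4 * h0\<^sup>2 / (2 * z\<^sup>2))"
  assumes dY1: "\<And>t. t \<ge> 0 \<Longrightarrow> (Y1 has_real_derivative V1 t) (at t within {0..})"
    and dY2: "\<And>t. t \<ge> 0 \<Longrightarrow> (Y2 has_real_derivative V2 t) (at t within {0..})"
    and dV1: "\<And>t. t \<ge> 0 \<Longrightarrow> (V1 has_real_derivative (- deriv U (\<rho> t) / \<rho> t) * Y1 t) (at t within {0..})"
    and dV2: "\<And>t. t \<ge> 0 \<Longrightarrow> (V2 has_real_derivative (- deriv U (\<rho> t) / \<rho> t) * Y2 t) (at t within {0..})"
    and nz: "\<And>t. t \<ge> 0 \<Longrightarrow> \<rho> t > 0"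
    and dU: "\<And>z. z > 0 \<Longrightarrow> (U has_real_derivative deriv U z) (at z)"
    and i1: "Y1 0 = r0 * cos p0" and i2: "Y2 0 = r0 * sin p0"
    and i3: "V1 0 = g0 * cos p0 - r0 * h0 * sin p0" and i4: "V2 0 = g0 * sin p0 + r0 * h0 * cos p0"
    and r0: "r0 > 0" and g0: "g0 > 0"
    and Mc: "\<And>z. z \<ge> r0 \<Longrightarrow> - deriv U z + (r0\<^sup>2 * h0)\<^sup>2 / z ^ 3 \<ge> 0"
  shows "\<forall>t\<ge>0. Y1 t * V2 t - Y2 t * V1 t = r0\<^sup>2 * h0 \<and> \<rho> t \<ge> r0 \<and>
            Y1 t * V1 t + Y2 t * V2 t = \<rho> t * sqrt (2 * Q (\<rho> t)) \<and>
            integral {r0..\<rho> t} (\<lambda>z. 1 / sqrt (2 * Q z)) = t"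
    and "\<forall>z\<ge>r0. 2 * Q z > 0"
    and "\<forall>a b. r0 \<le> a \<and> a < b \<longrightarrow> integral {r0..a} (\<lambda>z. 1 / sqrt (2 * Q z)) < integral {r0..b} (\<lambda>z. 1 / sqrt (2 * Q z))"
proof -
  define p where "p = (\<lambda>t. Y1 t * V1 t + Y2 t * V2 t)"
  define c where "c = (\<lambda>t. - deriv U (\<rho> t) / \<rho> t)"
  have d\<rho>: "(\<rho> has_real_derivative p t / \<rho> t) (at t within {0..})" if "t \<ge> 0" for t
  proof -
    have pos: "Y1 t ^ 2 + Y2 t ^ 2 > 0" using nz[OF that] unfolding \<rho>_def by simp
    show ?thesis unfolding \<rho>_def p_def
      using pos
      apply (auto intro!: derivative_eq_intros dY1[OF that] dY2[OF that] simp: power2_eq_square)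
      apply (simp add: divide_simps)
      done
  qed
  have \<rho>0: "\<rho> 0 = r0" unfolding \<rho>_def i1 i2
    using r0 by (simp add: power_mult_distrib algebra_simps flip: distrib_left)
  have dL: "((\<lambda>t. Y1 t * V2 t - Y2 t * V1 t) has_real_derivative 0) (at t within {0..})" if "t \<ge> 0" for t
    using that
    by (auto intro!: derivative_eq_intros dY1[OF that] dY2[OF that] dV1[OF that] dV2[OF that]
        simp: algebra_simps)
  have L: "Y1 t * V2 t - Y2 t * V1 t = r0\<^sup>2 * h0" if "t \<ge> 0" for t
  proof -
    have "Y1 t * V2 t - Y2 t * V1 t = Y1 0 * V2 0 - Y2 0 * V1 0"
      using const0[of "\<lambda>t. Y1 t * V2 t - Y2 t * V1 t", OF dL that] .
    also have "\<dots> = r0\<^sup>2 * h0"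
      unfolding i1 i2 i3 i4 using sin_cos_squared_add[of p0] by algebra
    finally show ?thesis .
  qed
  have dE: "((\<lambda>t. (V1 t ^ 2 + V2 t ^ 2) / 2 + U (\<rho> t)) has_real_derivative 0) (at t within {0..})"
    if "t \<ge> 0" for t
    using nz[OF that]
    by (auto intro!: derivative_eq_intros dV1[OF that] dV2[OF that] DERIV_chain2[OF dU[OF nz[OF that]] d\<rho>[OF that]]
        simp: field_simps p_def)
  have E: "(V1 t ^ 2 + V2 t ^ 2) / 2 + U (\<rho> t) = (g0\<^sup>2 + r0\<^sup>2 * h0\<^sup>2) / 2 + U r0" if "t \<ge> 0" for t
  proof -
    have "(V1 t ^ 2 + V2 t ^ 2) / 2 + U (\<rho> t) = (V1 0 ^ 2 + V2 0 ^ 2) / 2 + U (\<rho> 0)"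
      using const0[of "\<lambda>t. (V1 t ^ 2 + V2 t ^ 2) / 2 + U (\<rho> t)", OF dE that] .
    also have "V1 0 ^ 2 + V2 0 ^ 2 = (g0\<^sup>2 + r0\<^sup>2 * h0\<^sup>2)"
      unfolding i3 i4 using sin_cos_squared_add[of p0] by algebra
    finally show ?thesis using \<rho>0 by simp
  qed
  have key: "(p t / \<rho> t)\<^sup>2 = 2 * Q (\<rho> t)" if "t \<ge> 0" for t
  proof -
    have r2: "(\<rho> t)\<^sup>2 = Y1 t ^ 2 + Y2 t ^ 2" unfolding \<rho>_def by simp
    have lag: "(p t)\<^sup>2 + (Y1 t * V2 t - Y2 t * V1 t)\<^sup>2 = (\<rho> t)\<^sup>2 * (V1 t ^ 2 + V2 t ^ 2)"
      unfolding r2 p_def by (simp add: algebra_simps power2_eq_square)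
    have n: "\<rho> t \<noteq> 0" using nz[OF that] by simp
    have "(p t / \<rho> t)\<^sup>2 = (V1 t ^ 2 + V2 t ^ 2) - (r0\<^sup>2 * h0)\<^sup>2 / (\<rho> t)\<^sup>2"
      using lag L[OF that] n by (simp add: field_simps)
    also have "\<dots> = 2 * Q (\<rho> t)"
    proof -
      have vv: "V1 t ^ 2 + V2 t ^ 2 = g0\<^sup>2 + r0\<^sup>2 * h0\<^sup>2 + 2 * U r0 - 2 * U (\<rho> t)"
        using E[OF that] by (simp add: field_simps)
      show ?thesis unfolding vv Q_def using n by (simp add: power_mult_distrib field_simps)
    qed
    finally show ?thesis .
  qed
  have dQ: "(Q has_real_derivative (- deriv U z + r0 ^ 4 * h0\<^sup>2 / z ^ 3)) (at z)" if "z > 0" for z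
    unfolding Q_def using that
    by (auto intro!: derivative_eq_intros dU[OF that] simp: field_simps power2_eq_square power3_eq_cube)
  have Qr0: "Q r0 = g0\<^sup>2 / 2" unfolding Q_def using r0 by (simp add: field_simps power2_eq_square power4_eq_xxxx)
  have Qge: "Q z \<ge> g0\<^sup>2 / 2" if "z \<ge> r0" for z
  proof -
    have "Q r0 \<le> Q z"
    proof (rule DERIV_nonneg_imp_nondecreasing[OF that])
      fix x assume x: "r0 \<le> x" "x \<le> z"
      have "- deriv U x + r0 ^ 4 * h0\<^sup>2 / x ^ 3 \<ge> 0" using Mc[OF x(1)]
        by (simp add: power_mult_distrib flip: power_mult)
      then show "\<exists>y. (Q has_real_derivative y) (at x) \<and> 0 \<le> y" using dQ[of x] x r0 by auto
    qed
    then show ?thesis using Qr0 by simp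
  qed
  have contp: "continuous_on {0..} p"
  proof -
    have "continuous_on {0..} Y1" by (rule cont0[of Y1 V1]) (rule dY1)
    moreover have "continuous_on {0..} Y2" by (rule cont0[of Y2 V2]) (rule dY2)
    moreover have "continuous_on {0..} V1" by (rule cont0[of V1]) (rule dV1)
    moreover have "continuous_on {0..} V2" by (rule cont0[of V2]) (rule dV2)
    ultimately show ?thesis unfolding p_def by (intro continuous_intros) auto
  qed
  have p0: "p 0 = r0 * g0"
    unfolding p_def i1 i2 i3 i4 using sin_cos_squared_add[of p0] by algebra
  have ppos: "p t > 0" if t0: "t \<ge> 0" for t
  proof (rule ccontr)
    assume "\<not> p t > 0"
    then have pt: "p t \<le> 0" by simp
    have cp: "continuous_on {a..b} p" if "0 \<le> a" for a b
      using contp that by (elim continuous_on_subset) auto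
    have p0pos: "p 0 > 0" using p0 r0 g0 by simp
    obtain z0 where z0: "0 \<le> z0" "z0 \<le> t" "p z0 = 0"
      using IVT2'[of p t 0 0] pt t0 cp[of 0 t] p0pos by auto
    define Z where "Z = {x \<in> {0..t}. p x = 0}"
    have cZ: "closed Z" unfolding Z_def by (rule continuous_closed_preimage_constant) (use cp in auto)
    have bZ: "bounded Z" unfolding Z_def by (rule bounded_subset[of "{0..t}"]) auto
    have cpZ: "compact Z" using cZ bZ by (simp add: compact_eq_bounded_closed)
    have neZ: "Z \<noteq> {}" using z0 unfolding Z_def by auto
    obtain m where m1: "m \<in> Z" and m2: "\<forall>x\<in>Z. m \<le> x"
      using compact_attains_inf[OF cpZ neZ] by blast
    have m: "m \<in> Z" "\<And>x. x \<in> Z \<Longrightarrow> m \<le> x" using m1 m2 by auto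
    have m0: "0 \<le> m" "p m = 0" using m unfolding Z_def by auto
    have pbefore: "p x > 0" if px: "0 \<le> x" "x < m" for x
    proof (rule ccontr)
      assume "\<not> p x > 0"
      then obtain z where "0 \<le> z" "z \<le> x" "p z = 0"
        using IVT2'[of p x 0 0] cp[of 0 x] p0pos px by auto
      then have "z \<in> Z" using px m unfolding Z_def by auto
      then have "m \<le> z" by (rule m(2))
      then show False using \<open>z \<le> x\<close> \<open>x < m\<close> by linarith
    qed
    have "\<rho> 0 \<le> \<rho> m"
    proof (rule DERIV_nonneg_imp_increasing_open[OF m0(1)])
      fix x assume x: "0 < x" "x < m"
      have "(\<rho> has_real_derivative p x / \<rho> x) (at x)" using d\<rho>[of x] interior0[of x] x by auto
      moreover have "p x / \<rho> x \<ge> 0" using pbefore[of x] nz[of x] x by auto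
      ultimately show "\<exists>y. (\<rho> has_real_derivative y) (at x) \<and> 0 \<le> y" by blast
    next
      have "continuous_on {0..} \<rho>" by (rule cont0[of \<rho>]) (rule d\<rho>)
      then show "continuous_on {0..m} \<rho>" by (elim continuous_on_subset) auto
    qed
    then have "r0 \<le> \<rho> m" using \<rho>0 by simp
    then have q1: "Q (\<rho> m) \<ge> g0\<^sup>2 / 2" by (rule Qge)
    have "(p m / \<rho> m)\<^sup>2 = 2 * Q (\<rho> m)" using key m0(1) .
    then have "Q (\<rho> m) = 0" using m0(2) by simp
    moreover have "g0\<^sup>2 > 0" using g0 by simp
    ultimately show False using q1 by linarith
  qed
  have dr0: "(\<rho> has_real_derivative p t / \<rho> t) (at t within {0..})" "p t / \<rho> t \<ge> 0" if "t \<ge> 0" for t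
    using d\<rho>[OF that] ppos[OF that] nz[OF that] by auto
  have \<rho>mono: "\<rho> a \<le> \<rho> b" if "0 \<le> a" "a \<le> b" for a b
    using mono0[of \<rho> "\<lambda>t. p t / \<rho> t", OF dr0(1) dr0(2) that] by auto
  have \<rho>ge: "\<rho> t \<ge> r0" if "t \<ge> 0" for t using \<rho>mono[of 0 t] that \<rho>0 by simp
  have psq: "p t = \<rho> t * sqrt (2 * Q (\<rho> t))" if "t \<ge> 0" for t
  proof -
    have "sqrt (2 * Q (\<rho> t)) = \<bar>p t / \<rho> t\<bar>" using key[OF that] by (metis real_sqrt_abs)
    also have "\<dots> = p t / \<rho> t" using ppos[OF that] nz[OF that] by simp
    finally show ?thesis using nz[OF that] by simp
  qed
  define F where "F = (\<lambda>z. 1 / sqrt (2 * Q z))"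
  have Fpos: "2 * Q z > 0" if "z \<ge> r0" for z proof -
    have "g0\<^sup>2 > 0" using g0 by simp
    then show ?thesis using Qge[OF that] by linarith
  qed
  have contF: "continuous_on {r0..B} F" for B
  proof (rule DERIV_atLeastAtMost_imp_continuous_on)
    fix z assume z: "r0 \<le> z" "z \<le> B"
    have "Q z > 0" using Fpos[OF z(1)] by simp
    then show "\<exists>y. (F has_real_derivative y) (at z)" unfolding F_def
      using z r0 by (intro exI) (auto intro!: derivative_eq_intros dQ)
  qed
  have time: "integral {r0..\<rho> t} F = t" if t0: "t \<ge> 0" for t
  proof -
    have dG: "((\<lambda>\<tau>. integral {r0..\<rho> \<tau>} F - \<tau>) has_derivative (\<lambda>h. 0)) (at \<tau> within {0..t})"
      if "\<tau> \<in> {0..t}" for \<tau>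
    proof -
      have sub: "\<rho> ` {0..t} \<subseteq> {r0..\<rho> t}" using \<rho>ge \<rho>mono by auto
      have "((\<lambda>u. integral {r0..u} F) has_real_derivative F (\<rho> \<tau>)) (at (\<rho> \<tau>) within {r0..\<rho> t})"
        by (rule integral_has_real_derivative[OF contF]) (use sub that in blast)
      then have i1: "((\<lambda>u. integral {r0..u} F) has_real_derivative F (\<rho> \<tau>)) (at (\<rho> \<tau>) within \<rho> ` {0..t})"
        using sub by (rule has_field_derivative_subset)
      have i2: "(\<rho> has_real_derivative p \<tau> / \<rho> \<tau>) (at \<tau> within {0..t})"
        using d\<rho>[of \<tau>] that by (auto intro: has_field_derivative_subset)
      have "((\<lambda>\<tau>. integral {r0..\<rho> \<tau>} F) has_real_derivative F (\<rho> \<tau>) * (p \<tau> / \<rho> \<tau>)) (at \<tau> within {0..t})"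
        using DERIV_image_chain[OF i1 i2] by (simp add: o_def)
      moreover have "F (\<rho> \<tau>) * (p \<tau> / \<rho> \<tau>) = 1"
        using psq[of \<tau>] that nz[of \<tau>] Fpos[OF \<rho>ge[of \<tau>]] unfolding F_def by auto
      ultimately have "((\<lambda>\<tau>. integral {r0..\<rho> \<tau>} F - \<tau>) has_real_derivative 1 - 1) (at \<tau> within {0..t})"
        by (auto intro!: derivative_eq_intros)
      then show ?thesis by (simp add: has_field_derivative_def times_zero_fun)
    qed
    have "integral {r0..\<rho> t} F - t = integral {r0..\<rho> 0} F - 0"
      by (rule has_derivative_zero_unique[of "{0..t}", OF _ dG]) (use t0 in auto)
    then show ?thesis using \<rho>0 by simp
  qed
  show "\<forall>t\<ge>0. Y1 t * V2 t - Y2 t * V1 t = r0\<^sup>2 * h0 \<and> \<rho> t \<ge> r0 \<and>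
            Y1 t * V1 t + Y2 t * V2 t = \<rho> t * sqrt (2 * Q (\<rho> t)) \<and>
            integral {r0..\<rho> t} (\<lambda>z. 1 / sqrt (2 * Q z)) = t"
    using L \<rho>ge psq time unfolding p_def F_def by simp
  show "\<forall>z\<ge>r0. 2 * Q z > 0" using Fpos by simp
  show "\<forall>a b. r0 \<le> a \<and> a < b \<longrightarrow> integral {r0..a} (\<lambda>z. 1 / sqrt (2 * Q z)) < integral {r0..b} (\<lambda>z. 1 / sqrt (2 * Q z))"
  proof (intro allI impI, elim conjE)
    fix a b assume ab: "r0 \<le> a" "a < b"
    have dI: "((\<lambda>u. integral {r0..u} F) has_real_derivative F u) (at u within {r0..b})" if "u \<in> {r0..b}" for u
      by (rule integral_has_real_derivative[OF contF that])
    have "integral {r0..a} F < integral {r0..b} F"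
    proof (rule DERIV_pos_imp_increasing_open[OF ab(2)])
      fix u assume u: "a < u" "u < b"
      have "u \<in> interior {r0..b}" using u ab by auto
      then have "((\<lambda>u. integral {r0..u} F) has_real_derivative F u) (at u)"
        using dI[of u] u ab at_within_interior[of u "{r0..b}"] by auto
      moreover have "F u > 0" unfolding F_def using Fpos[of u] u ab by simp
      ultimately show "\<exists>y. ((\<lambda>u. integral {r0..u} F) has_real_derivative y) (at u) \<and> 0 < y" by blast
    next
      have "continuous_on {r0..b} (\<lambda>u. integral {r0..u} F)"
        unfolding continuous_on_eq_continuous_within using dI DERIV_continuous by blast
      then show "continuous_on {a..b} (\<lambda>u. integral {r0..u} F)" by (rule continuous_on_subset) (use ab in auto)
    qed
    then show "integral {r0..a} (\<lambda>z. 1 / sqrt (2 * Q z)) < integral {r0..b} (\<lambda>z. 1 / sqrt (2 * Q z))"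
      unfolding F_def .
  qed
qed



definition dphi :: "real \<Rightarrow> real" where "dphi x = - 1 / (2 * x * sqrt x)"

lemma phi_deriv: "x > 0 \<Longrightarrow> ((\<lambda>x. 1 / sqrt x) has_real_derivative dphi x) (at x)"
  unfolding dphi_def
  by (auto intro!: derivative_eq_intros simp: field_simps power2_eq_square)

lemma Tderiv_abs:
  fixes U :: "real \<Rightarrow> real" and Pv :: "real \<Rightarrow> real \<times> real" and D :: "(real \<times> real) set"
  defines "X \<equiv> \<lambda>(p::real\<times>real) t. fst p - snd p / t\<^sup>2 - 2 * U t"
  assumes c: "0 < c" "c < s0" "s0 < z"
    and contU: "continuous_on {c..z} U"
    and D: "open D" "convex D" "Pv s0 \<in> D"
    and posX: "\<And>p t. p \<in> D \<Longrightarrow> t \<in> {c..z} \<Longrightarrow> X p t > 0"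
    and dP: "(Pv has_derivative (\<lambda>h. h *\<^sub>R P')) (at s0)"
  shows "((\<lambda>s. integral {s..z} (\<lambda>t. 1 / sqrt (X (Pv s) t))) has_real_derivative
          (- 1 / sqrt (X (Pv s0) s0) + integral {s0..z} (\<lambda>t. dphi (X (Pv s0) t) * (fst P' - snd P' / t\<^sup>2)))) (at s0)"
proof -
  define P0 where "P0 = Pv s0"
  define f where "f = (\<lambda>p t. 1 / sqrt (X p t))"
  define W where "W = (\<lambda>p t. (dphi (X p t), - dphi (X p t) / t\<^sup>2))"
  define fx where "fx = (\<lambda>p t. blinfun_inner_left (W p t))"
  have contX: "continuous_on (D \<times> {c..z}) (\<lambda>(p,t). X p t)"
  proof -
    have "continuous_on (D \<times> {c..z}) (\<lambda>x. U (snd x))"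
      by (rule continuous_on_compose2[OF contU continuous_on_snd]) auto
    then show ?thesis unfolding X_def split_beta using c
      by (intro continuous_intros) auto
  qed
  have contf: "continuous_on (D \<times> {c..z}) (\<lambda>(p,t). f p t)"
  proof -
    have "continuous_on (D \<times> {c..z}) (\<lambda>x. 1 / sqrt ((\<lambda>(p,t). X p t) x))"
      using contX posX by (intro continuous_intros) (auto simp: split_beta, fastforce+)
    then show ?thesis unfolding f_def by (simp add: split_beta)
  qed
  have contW: "continuous_on (D \<times> {c..z}) (\<lambda>(p,t). W p t)"
  proof -
    have "continuous_on (D \<times> {c..z}) (\<lambda>x. dphi ((\<lambda>(p,t). X p t) x))"
      unfolding dphi_def using contX posX c
      by (intro continuous_intros) (auto simp: split_beta, fastforce+)
    moreover have "continuous_on (D \<times> {c..z}) (\<lambda>x. snd x)" by (intro continuous_intros)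
    ultimately have "continuous_on (D \<times> {c..z}) (\<lambda>x. (dphi ((\<lambda>(p,t). X p t) x), - dphi ((\<lambda>(p,t). X p t) x) / (snd x)\<^sup>2))"
      using c by (intro continuous_intros) auto
    then show ?thesis unfolding W_def by (simp add: split_beta)
  qed
  have contfx: "continuous_on (D \<times> {c..z}) (\<lambda>(p,t). fx p t)"
    unfolding fx_def split_beta
    using bounded_linear.continuous_on[OF bounded_linear_blinfun_inner_left contW[unfolded split_beta]] .
  have dfx: "((\<lambda>p. f p t) has_derivative blinfun_apply (fx p t)) (at p within D')"
    if "p \<in> D" "t \<in> {c..z}" for p t D'
  proof -
    have Xd: "((\<lambda>p. X p t) has_derivative (\<lambda>d. fst d - snd d / t\<^sup>2)) (at p within D')"
    proof -
      have e: "(\<lambda>p. X p t) = (\<lambda>p. fst p - snd p * (1 / t\<^sup>2) - 2 * U t)" by (simp add: X_def fun_eq_iff split_beta)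
      have "((\<lambda>p. fst p - snd p * (1 / t\<^sup>2) - 2 * U t) has_derivative (\<lambda>d. fst d - snd d * (1 / t\<^sup>2) - 0)) (at p within D')"
        by (intro derivative_intros)
      then show ?thesis unfolding e by simp
    qed
    have "((\<lambda>p. f p t) has_derivative (\<lambda>d. (fst d - snd d / t\<^sup>2) * dphi (X p t))) (at p within D')"
      unfolding f_def by (rule DERIV_compose_FDERIV[OF phi_deriv[OF posX[OF that]] Xd])
    moreover have "(\<lambda>d. (fst d - snd d / t\<^sup>2) * dphi (X p t)) = blinfun_apply (fx p t)"
      unfolding fx_def W_def by (auto simp: fun_eq_iff blinfun_inner_left.rep_eq inner_prod_def algebra_simps)
    ultimately show ?thesis by simp
  qed
  have contf1: "continuous_on {c..z} (f p)" if "p \<in> D" for p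
  proof -
    have "continuous_on {c..z} (\<lambda>t. (\<lambda>(p,t). f p t) (p, t))"
    proof (rule continuous_on_compose2[OF contf])
      show "(\<lambda>t. (p,t)) ` {c..z} \<subseteq> D \<times> {c..z}" using that by blast
    qed (intro continuous_intros)
    then show ?thesis by simp
  qed
  have intf: "f p integrable_on {a..b}" if "p \<in> D" "{a..b} \<subseteq> {c..z}" for p a b
    by (rule integrable_continuous_interval) (rule continuous_on_subset[OF contf1[OF that(1)] that(2)])
  have P0D: "P0 \<in> D" using D P0_def by simp
  have LB: "((\<lambda>p. integral {c..w} (f p)) has_derivative blinfun_apply (integral {c..w} (fx P0))) (at P0)"
    if w: "w \<in> {c..z}" for w
  proof -
    have "((\<lambda>p. integral (cbox c w) (f p)) has_derivative blinfun_apply (integral (cbox c w) (fx P0))) (at P0 within D)"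
    proof (rule leibniz_rule)
      show "((\<lambda>p. f p t) has_derivative blinfun_apply (fx p t)) (at p within D)"
        if "p \<in> D" "t \<in> cbox c w" for p t
        using dfx that w by auto
      show "f p integrable_on cbox c w" if "p \<in> D" for p using intf[OF that] w by auto
      show "continuous_on (D \<times> cbox c w) (\<lambda>(p, t). fx p t)"
        by (rule continuous_on_subset[OF contfx]) (use w in auto)
    qed (use P0D D in auto)
    then show ?thesis using at_within_open[OF P0D D(1)] by (simp add: cbox_interval)
  qed
  have s0Y: "s0 \<in> {c<..<z}" using c by auto
  have dJ: "((\<lambda>(p,w). integral {c..w} (f p)) has_derivative
      (\<lambda>(tp,tw). blinfun_apply (integral {c..s0} (fx P0)) tp + blinfun_apply (blinfun_mult_right (f P0 s0)) tw)) (at (P0, s0))"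
  proof -
    have "((\<lambda>(p,w). integral {c..w} (f p)) has_derivative
      (\<lambda>(tp,tw). blinfun_apply (integral {c..s0} (fx P0)) tp + blinfun_apply (blinfun_mult_right (f P0 s0)) tw)) (at (P0, s0) within D \<times> {c<..<z})"
    proof (rule has_derivative_partialsI[where fy="\<lambda>p w. blinfun_mult_right (f p w)"])
      show "((\<lambda>p. integral {c..s0} (f p)) has_derivative blinfun_apply (integral {c..s0} (fx P0))) (at P0 within D)"
        using LB[of s0] c by (auto intro: has_derivative_at_withinI)
      show "((\<lambda>w. integral {c..w} (f p)) has_derivative blinfun_apply (blinfun_mult_right (f p w))) (at w within {c<..<z})"
        if "p \<in> D" "w \<in> {c<..<z}" for p w
      proof -
        have "((\<lambda>w. integral {c..w} (f p)) has_real_derivative f p w) (at w within {c..z})"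
          by (rule integral_has_real_derivative[OF contf1[OF that(1)]]) (use that in auto)
        then have "((\<lambda>w. integral {c..w} (f p)) has_real_derivative f p w) (at w within {c<..<z})"
          by (rule has_field_derivative_subset) auto
        then show ?thesis by (simp add: has_field_derivative_def blinfun_mult_right.rep_eq)
      qed
      have "continuous_on (D \<times> {c<..<z}) (\<lambda>x. blinfun_mult_right ((\<lambda>(p,w). f p w) x))"
        by (rule bounded_linear.continuous_on[OF bounded_linear_blinfun_mult_right continuous_on_subset[OF contf]]) auto
      then show "continuous (at (P0, s0) within D \<times> {c<..<z}) (\<lambda>(p,w). blinfun_mult_right (f p w))"
        using P0D s0Y unfolding continuous_on_eq_continuous_within split_beta by auto
    qed (use s0Y in auto)
    moreover have "open (D \<times> {c<..<z})" using D(1) by (intro open_Times) auto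
    ultimately show ?thesis using at_within_open[of "(P0,s0)" "D \<times> {c<..<z}"] P0D s0Y by simp
  qed
  define A where "A = integral {c..z} (fx P0)"
  define B where "B = integral {c..s0} (fx P0)"
  have dPair: "((\<lambda>s. (Pv s, s)) has_derivative (\<lambda>h. (h *\<^sub>R P', h))) (at s0)"
    by (rule has_derivative_Pair[OF dP has_derivative_ident])
  have comp1: "((\<lambda>s. integral {c..s} (f (Pv s))) has_derivative
      (\<lambda>h. blinfun_apply B (h *\<^sub>R P') + blinfun_apply (blinfun_mult_right (f P0 s0)) h)) (at s0)"
    using has_derivative_compose[OF dPair dJ[unfolded P0_def]] unfolding P0_def B_def
    by simp
  have comp2: "((\<lambda>s. integral {c..z} (f (Pv s))) has_derivative (\<lambda>h. blinfun_apply A (h *\<^sub>R P'))) (at s0)"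
  proof -
    have "z \<in> {c..z}" using c by simp
    from has_derivative_compose[OF dP LB[OF this, unfolded P0_def]] show ?thesis unfolding P0_def A_def by simp
  qed
  define Dv where "Dv = blinfun_apply A P' - blinfun_apply B P' - f P0 s0"
  have d3: "((\<lambda>s. integral {c..z} (f (Pv s)) - integral {c..s} (f (Pv s))) has_real_derivative Dv) (at s0)"
  proof -
    have "((\<lambda>s. integral {c..z} (f (Pv s)) - integral {c..s} (f (Pv s))) has_derivative
      (\<lambda>h. blinfun_apply A (h *\<^sub>R P') - (blinfun_apply B (h *\<^sub>R P') + blinfun_apply (blinfun_mult_right (f P0 s0)) h))) (at s0)"
      by (rule has_derivative_diff[OF comp2 comp1])
    moreover have "(\<lambda>h. blinfun_apply A (h *\<^sub>R P') - (blinfun_apply B (h *\<^sub>R P') + blinfun_apply (blinfun_mult_right (f P0 s0)) h))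
        = (*) Dv"
      unfolding Dv_def by (auto simp: fun_eq_iff blinfun.scaleR_right blinfun_mult_right.rep_eq algebra_simps)
    ultimately show ?thesis by (simp add: has_field_derivative_def)
  qed
  have ev: "\<forall>\<^sub>F s in at s0. Pv s \<in> D \<and> s \<in> {c<..<z}"
  proof -
    have "isCont Pv s0" using dP by (rule has_derivative_continuous)
    then have "(Pv \<longlongrightarrow> Pv s0) (at s0)" by (simp add: isCont_def)
    then have e1: "\<forall>\<^sub>F s in at s0. Pv s \<in> D" using D by (auto intro: topological_tendstoD)
    have e2: "\<forall>\<^sub>F s in at s0. s \<in> {c<..<z}"
      by (rule topological_tendstoD[OF tendsto_ident_at]) (use s0Y in auto)
    show ?thesis using e1 e2 by eventually_elim auto
  qed
  have d4: "((\<lambda>s. integral {s..z} (\<lambda>t. 1 / sqrt (X (Pv s) t))) has_real_derivative Dv) (at s0)"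
    unfolding has_field_derivative_def
  proof (rule has_derivative_transform_eventually[OF d3[unfolded has_field_derivative_def]])
    show "\<forall>\<^sub>F s in at s0. integral {c..z} (f (Pv s)) - integral {c..s} (f (Pv s)) = integral {s..z} (\<lambda>t. 1 / sqrt (X (Pv s) t))"
      using ev
    proof eventually_elim
      case (elim s)
      have "integral {c..s} (f (Pv s)) + integral {s..z} (f (Pv s)) = integral {c..z} (f (Pv s))"
        using Henstock_Kurzweil_Integration.integral_combine[where a=c and c=s and b=z and f="f (Pv s)"] elim intf[of "Pv s" c z] by auto
      then show ?case unfolding f_def by simp
    qed
    have "integral {c..s0} (f (Pv s0)) + integral {s0..z} (f (Pv s0)) = integral {c..z} (f (Pv s0))"
      using Henstock_Kurzweil_Integration.integral_combine[where a=c and c=s0 and b=z and f="f (Pv s0)"] c intf[of "Pv s0" c z] D by auto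
    then show "integral {c..z} (f (Pv s0)) - integral {c..s0} (f (Pv s0)) = integral {s0..z} (\<lambda>t. 1 / sqrt (X (Pv s0) t))"
      unfolding f_def by simp
  qed auto
  have contfx1: "continuous_on {c..z} (fx P0)"
  proof -
    have "continuous_on {c..z} (\<lambda>t. (\<lambda>(p,t). fx p t) (P0, t))"
    proof (rule continuous_on_compose2[OF contfx])
      show "(\<lambda>t. (P0,t)) ` {c..z} \<subseteq> D \<times> {c..z}" using P0D by blast
    qed (intro continuous_intros)
    then show ?thesis by simp
  qed
  have contfx2: "continuous_on {c..z} (\<lambda>t. blinfun_apply (fx P0 t) P')"
    using blinfun.continuous_on[OF contfx1 continuous_on_const] by simp
  have Aeq: "blinfun_apply A P' = integral {c..z} (\<lambda>t. blinfun_apply (fx P0 t) P')"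
    unfolding A_def by (rule blinfun_apply_integral) (rule integrable_continuous_interval[OF contfx1])
  have Beq: "blinfun_apply B P' = integral {c..s0} (\<lambda>t. blinfun_apply (fx P0 t) P')"
    unfolding B_def using c
    by (intro blinfun_apply_integral integrable_continuous_interval continuous_on_subset[OF contfx1]) auto
  have "integral {c..s0} (\<lambda>t. blinfun_apply (fx P0 t) P') + integral {s0..z} (\<lambda>t. blinfun_apply (fx P0 t) P')
      = integral {c..z} (\<lambda>t. blinfun_apply (fx P0 t) P')"
    using Henstock_Kurzweil_Integration.integral_combine[where a=c and c=s0 and b=z and f="\<lambda>t. blinfun_apply (fx P0 t) P'"]
      c integrable_continuous_interval[OF contfx2] by auto
  then have AB: "blinfun_apply A P' - blinfun_apply B P' = integral {s0..z} (\<lambda>t. dphi (X P0 t) * (fst P' - snd P' / t\<^sup>2))"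
    unfolding Aeq Beq
    by (simp add: fx_def W_def blinfun_inner_left.rep_eq inner_prod_def algebra_simps)
  have "Dv = - 1 / sqrt (X (Pv s0) s0) + integral {s0..z} (\<lambda>t. dphi (X (Pv s0) t) * (fst P' - snd P' / t\<^sup>2))"
    unfolding Dv_def AB by (simp add: f_def P0_def)
  then show ?thesis using d4 by simp
qed




lemma EV_eq: "2 * (E0 U g h s - Vpot U h t s) = ((g s)\<^sup>2 + 2 * U s + s\<^sup>2 * (h s)\<^sup>2) - s ^ 4 * (h s)\<^sup>2 / t\<^sup>2 - 2 * U t"
  unfolding E0_def Vpot_def by (simp add: field_simps)

lemma abs_fst_le: "\<bar>fst (q::real\<times>real)\<bar> \<le> norm q"
  by (metis norm_fst_le prod.collapse real_norm_def)
lemma abs_snd_le: "\<bar>snd (q::real\<times>real)\<bar> \<le> norm q"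
  by (metis norm_snd_le prod.collapse real_norm_def)

lemma Tderiv_conc:
  fixes U g h :: "real \<Rightarrow> real" and s0 z :: real
  assumes s0: "0 < s0" "s0 < z"
    and dU: "\<And>x. x > 0 \<Longrightarrow> (U has_real_derivative deriv U x) (at x)"
    and dg: "(g has_real_derivative g') (at s0)" and dh: "(h has_real_derivative h') (at s0)"
    and gpos: "g s0 > 0"
    and pos: "\<And>t. s0 \<le> t \<Longrightarrow> t \<le> z \<Longrightarrow> 2 * (E0 U g h s0 - Vpot U h t s0) > 0"
  shows "((\<lambda>s. integral {s..z} (\<lambda>t. 1 / sqrt (2 * (E0 U g h s - Vpot U h t s)))) has_real_derivative
     (- 1 / g s0 + integral {s0..z} (\<lambda>t. deriv (\<lambda>s. 1 / sqrt (2 * (E0 U g h s - Vpot U h t s))) s0))) (at s0)"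
proof -
  define \<alpha> where "\<alpha> = (\<lambda>s. (g s)\<^sup>2 + 2 * U s + s\<^sup>2 * (h s)\<^sup>2)"
  define \<beta> where "\<beta> = (\<lambda>s. s ^ 4 * (h s)\<^sup>2)"
  define Pv where "Pv = (\<lambda>s. (\<alpha> s, \<beta> s))"
  define X where "X = (\<lambda>(p::real\<times>real) t. fst p - snd p / t\<^sup>2 - 2 * U t)"
  have EV: "2 * (E0 U g h s - Vpot U h t s) = X (Pv s) t" for s t
    unfolding X_def Pv_def \<alpha>_def \<beta>_def EV_eq by simp
  have "\<exists>d. (\<alpha> has_real_derivative d) (at s0)" unfolding \<alpha>_def
    by (intro exI) (auto intro!: derivative_eq_intros dg dh dU s0)
  then obtain a' where da: "(\<alpha> has_real_derivative a') (at s0)" by blast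
  have "\<exists>d. (\<beta> has_real_derivative d) (at s0)" unfolding \<beta>_def
    by (intro exI) (auto intro!: derivative_eq_intros dh)
  then obtain b' where db: "(\<beta> has_real_derivative b') (at s0)" by blast
  define P0 where "P0 = Pv s0"
  define Xf where "Xf = (\<lambda>t. X P0 t)"
  have contU: "continuous_on {0<..} U"
    unfolding continuous_on_eq_continuous_within
  proof
    fix x :: real assume "x \<in> {0<..}"
    then have "isCont U x" using dU[of x] by (simp add: DERIV_isCont)
    then show "continuous (at x within {0<..}) U" by (rule continuous_at_imp_continuous_within)
  qed
  have contXf: "continuous_on {0<..} Xf"
    unfolding Xf_def X_def split_beta
    by (intro continuous_intros contU) auto
  have Xfs0: "Xf s0 = (g s0)\<^sup>2"
  proof -
    have "Xf s0 = 2 * (E0 U g h s0 - Vpot U h s0 s0)" unfolding Xf_def P0_def EV ..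
    also have "\<dots> = (g s0)\<^sup>2" unfolding E0_def Vpot_def using s0 by (simp add: field_simps power2_eq_square power4_eq_xxxx)
    finally show ?thesis .
  qed
  have Xfpos1: "Xf t > 0" if "s0 \<le> t" "t \<le> z" for t
    using pos[OF that] unfolding Xf_def P0_def EV .
  have "isCont Xf s0" using contXf s0 by (simp add: continuous_on_eq_continuous_at)
  then have "(Xf \<longlongrightarrow> Xf s0) (at s0)" by (simp add: isCont_def)
  moreover have "0 < Xf s0" using Xfs0 gpos by simp
  ultimately have "\<forall>\<^sub>F t in at s0. 0 < Xf t" by (rule order_tendstoD(1))
  then obtain \<delta> where \<delta>: "\<delta> > 0" "\<And>t. t \<noteq> s0 \<Longrightarrow> dist t s0 < \<delta> \<Longrightarrow> 0 < Xf t"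
    unfolding eventually_at by auto
  define c where "c = max (s0 / 2) (s0 - \<delta> / 2)"
  have c: "0 < c" "c < s0" using s0 \<delta> unfolding c_def by auto
  have Xfpos: "Xf t > 0" if "c \<le> t" "t \<le> z" for t
  proof (cases "s0 \<le> t")
    case True then show ?thesis using Xfpos1 that by auto
  next
    case False
    then have "dist t s0 < \<delta>" using that c_def \<delta> by (auto simp: dist_real_def)
    then show ?thesis using \<delta>(2)[of t] False by auto
  qed
  have "\<exists>tm\<in>{c..z}. \<forall>t\<in>{c..z}. Xf tm \<le> Xf t"
    by (rule continuous_attains_inf) (use c s0 in \<open>auto intro: continuous_on_subset[OF contXf]\<close>)
  then obtain tm where tm: "tm \<in> {c..z}" "\<And>t. t \<in> {c..z} \<Longrightarrow> Xf tm \<le> Xf t" by blast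
  define \<kappa> where "\<kappa> = Xf tm"
  have \<kappa>: "\<kappa> > 0" using Xfpos tm(1) unfolding \<kappa>_def by auto
  define r where "r = \<kappa> / (2 * (1 + 1 / c\<^sup>2))"
  have r: "r > 0" using \<kappa> c unfolding r_def by (simp add: add_pos_pos)
  have rk: "r + r / c\<^sup>2 = \<kappa> / 2"
  proof -
    have pos2: "2 * (1 + 1 / c\<^sup>2) > 0" using c by (simp add: add_pos_pos)
    have "r + r / c\<^sup>2 = r * (2 * (1 + 1 / c\<^sup>2)) / 2" by (simp add: algebra_simps)
    also have "\<dots> = \<kappa> / 2" unfolding r_def using pos2 by simp
    finally show ?thesis .
  qed
  have posX: "X p t > 0" if p: "p \<in> ball P0 r" and t: "t \<in> {c..z}" for p t
  proof -
    have d: "norm (p - P0) < r" using p by (simp add: dist_norm norm_minus_commute)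
    have e1: "\<bar>fst p - fst P0\<bar> < r" using abs_fst_le[of "p - P0"] d by simp
    have e2: "\<bar>snd p - snd P0\<bar> < r" using abs_snd_le[of "p - P0"] d by simp
    have tc: "c\<^sup>2 \<le> t\<^sup>2" using t c by (intro power_mono) auto
    have "\<bar>snd p - snd P0\<bar> / t\<^sup>2 \<le> \<bar>snd p - snd P0\<bar> / c\<^sup>2"
    proof (rule divide_left_mono)
      show "0 < t\<^sup>2 * c\<^sup>2" using c t by (intro mult_pos_pos) auto
    qed (use tc in auto)
    also have "\<dots> \<le> r / c\<^sup>2" using e2 c by (intro divide_right_mono) auto
    finally have e3: "\<bar>snd p / t\<^sup>2 - snd P0 / t\<^sup>2\<bar> \<le> r / c\<^sup>2"
      by (simp add: diff_divide_distrib[symmetric] abs_divide)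
    have "X p t = Xf t + (fst p - fst P0) - (snd p / t\<^sup>2 - snd P0 / t\<^sup>2)"
      unfolding Xf_def X_def by simp
    moreover have "Xf t \<ge> \<kappa>" using tm(2)[OF t] unfolding \<kappa>_def .
    ultimately have "X p t \<ge> \<kappa> - r - r / c\<^sup>2" using e1 e3 by linarith
    then show ?thesis using rk \<kappa> by linarith
  qed
  have dP: "(Pv has_derivative (\<lambda>h. h *\<^sub>R (a', b'))) (at s0)"
  proof -
    have "((\<lambda>s. (\<alpha> s, \<beta> s)) has_derivative (\<lambda>h. ((*) a' h, (*) b' h))) (at s0)"
      by (rule has_derivative_Pair[OF da[unfolded has_field_derivative_def] db[unfolded has_field_derivative_def]])
    moreover have "(\<lambda>h. ((*) a' h, (*) b' h)) = (\<lambda>h. h *\<^sub>R (a', b'))" by (auto simp: fun_eq_iff)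
    ultimately show ?thesis unfolding Pv_def by simp
  qed
  have TA: "((\<lambda>s. integral {s..z} (\<lambda>t. 1 / sqrt (X (Pv s) t))) has_real_derivative
          (- 1 / sqrt (X (Pv s0) s0) + integral {s0..z} (\<lambda>t. dphi (X (Pv s0) t) * (fst (a', b') - snd (a', b') / t\<^sup>2)))) (at s0)"
    unfolding X_def
    by (rule Tderiv_abs[of c s0 z U "ball P0 r" Pv "(a', b')"])
       (use c s0 r posX dP in \<open>auto simp: P0_def X_def intro: continuous_on_subset[OF contU]\<close>)
  have feq: "(\<lambda>s. integral {s..z} (\<lambda>t. 1 / sqrt (X (Pv s) t))) =
      (\<lambda>s. integral {s..z} (\<lambda>t. 1 / sqrt (2 * (E0 U g h s - Vpot U h t s))))"
    by (simp only: EV)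
  have sq: "sqrt (X (Pv s0) s0) = g s0" using Xfs0 gpos unfolding Xf_def P0_def by simp
  have ieq: "integral {s0..z} (\<lambda>t. dphi (X (Pv s0) t) * (fst (a', b') - snd (a', b') / t\<^sup>2)) =
      integral {s0..z} (\<lambda>t. deriv (\<lambda>s. 1 / sqrt (2 * (E0 U g h s - Vpot U h t s))) s0)"
  proof (rule integral_cong)
    fix t assume t: "t \<in> {s0..z}"
    have inner: "((\<lambda>s. \<alpha> s - \<beta> s / t\<^sup>2 - 2 * U t) has_real_derivative a' - b' / t\<^sup>2) (at s0)"
      by (rule DERIV_diff[OF DERIV_diff[OF da DERIV_cdivide[OF db]] DERIV_const, simplified])
    have Xp: "X (Pv s0) t = \<alpha> s0 - \<beta> s0 / t\<^sup>2 - 2 * U t" unfolding X_def Pv_def by simp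
    have "X (Pv s0) t > 0" using Xfpos1[of t] t unfolding Xf_def P0_def by auto
    then have "((\<lambda>s. 1 / sqrt (\<alpha> s - \<beta> s / t\<^sup>2 - 2 * U t)) has_real_derivative
        dphi (X (Pv s0) t) * (a' - b' / t\<^sup>2)) (at s0)"
      using DERIV_chain2[OF phi_deriv inner] Xp by simp
    moreover have "(\<lambda>s. 1 / sqrt (\<alpha> s - \<beta> s / t\<^sup>2 - 2 * U t)) = (\<lambda>s. 1 / sqrt (2 * (E0 U g h s - Vpot U h t s)))"
      by (simp only: EV) (simp add: X_def Pv_def)
    ultimately have "((\<lambda>s. 1 / sqrt (2 * (E0 U g h s - Vpot U h t s))) has_real_derivative
        dphi (X (Pv s0) t) * (a' - b' / t\<^sup>2)) (at s0)" by simp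
    then show "dphi (X (Pv s0) t) * (fst (a', b') - snd (a', b') / t\<^sup>2) =
        deriv (\<lambda>s. 1 / sqrt (2 * (E0 U g h s - Vpot U h t s))) s0"
      by (simp add: DERIV_imp_deriv)
  qed
  show ?thesis using TA unfolding feq sq ieq .
qed




theorem theorem7:
  fixes \<Lambda> :: "(real^2) set"
    and R1 R2 :: real
    and U g h :: "real \<Rightarrow> real"
    and y :: "real \<Rightarrow> real^2 \<Rightarrow> real^2"
  assumes Lam_bounded: "bounded \<Lambda>"
    and Lam_closure: "\<exists>S. open S \<and> connected S \<and> \<Lambda> = closure S"
    and Lam_boundary: "piecewise_smooth_boundary \<Lambda>"
    and Lam_origin: "0 \<notin> \<Lambda>"
    and R_pos: "0 < R1" "R1 < R2"
    and Lam_annulus: "\<Lambda> \<subseteq> {x. R1 < norm x \<and> norm x < R2}"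
    and U_smooth: "\<forall>k. (deriv ^^ k) U differentiable_on {0<..}"
    and solves: "\<forall>x\<in>\<Lambda>. \<exists>y'. y 0 x = x \<and>
        (\<forall>t\<ge>0. y t x \<noteq> 0 \<and>
           ((\<lambda>s. y s x) has_vector_derivative y' t) (at t within {0..}) \<and>
           (y' has_vector_derivative central_force U (y t x)) (at t within {0..}))"
    and init_vel: "\<forall>x\<in>\<Lambda>. \<exists>\<phi>. continuous_on {0..} \<phi> \<and>
        (\<forall>t\<ge>0. y t x = polar_pt (norm (y t x)) (\<phi> t)) \<and>
        ((\<lambda>t. norm (y t x)) has_real_derivative g (norm x)) (at 0 within {0..}) \<and>
        (\<phi> has_real_derivative h (norm x)) (at 0 within {0..})"
    and g_pos: "\<forall>x\<in>\<Lambda>. g (norm x) > 0"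
    and gh_diff: "\<forall>r. R1 < r \<and> r < R2 \<longrightarrow> g differentiable (at r) \<and> h differentiable (at r)"
    and M_cond: "\<forall>r1 r2. R1 < r1 \<and> r1 \<le> r2 \<longrightarrow>
        - deriv U r2 + (Mmom h r1)\<^sup>2 / r2 ^ 3 \<ge> 0"
    and int_cond: "\<forall>r1 r2. R1 < r1 \<and> r1 < R2 \<and> r1 < r2 \<longrightarrow>
        (\<lambda>z. deriv (\<lambda>s. 1 / sqrt (2 * (E0 U g h s - Vpot U h z s))) r1) integrable_on {r1..r2} \<and>
        integral {r1..r2} (\<lambda>z. deriv (\<lambda>s. 1 / sqrt (2 * (E0 U g h s - Vpot U h z s))) r1)
          < 1 / g r1"
  shows "\<forall>t\<ge>0. \<forall>x1\<in>\<Lambda>. \<forall>x2\<in>\<Lambda>. x1 \<noteq> x2 \<longrightarrow> y t x1 \<noteq> y t x2"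
proof -
  have norm2: "norm (v::real^2) = sqrt ((v$1)\<^sup>2 + (v$2)\<^sup>2)" for v
    by (simp add: norm_vec_def L2_set_def UNIV_2)
  have dU: "(U has_real_derivative deriv U z) (at z)" if "z > 0" for z
  proof -
    have "U differentiable_on {0<..}" using U_smooth[rule_format, of 0] by simp
    then have "U differentiable (at z within {0<..})" using that unfolding differentiable_on_def by auto
    then have "U differentiable (at z)" using at_within_open[of z "{0<..}"] that by auto
    then show ?thesis by (simp add: DERIV_deriv_iff_real_differentiable)
  qed
  define F where "F = (\<lambda>r0 z. 1 / sqrt (2 * (E0 U g h r0 - Vpot U h z r0)))"
  have PR: "\<exists>V1 V2. (\<forall>t\<ge>0. ((\<lambda>t. y t x $ 1) has_real_derivative V1 t) (at t within {0..}) \<and>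
        ((\<lambda>t. y t x $ 2) has_real_derivative V2 t) (at t within {0..}) \<and>
        y t x $ 1 * V2 t - y t x $ 2 * V1 t = (norm x)\<^sup>2 * h (norm x) \<and>
        norm (y t x) \<ge> norm x \<and>
        y t x $ 1 * V1 t + y t x $ 2 * V2 t = norm (y t x) * sqrt (2 * (E0 U g h (norm x) - Vpot U h (norm (y t x)) (norm x))) \<and>
        integral {norm x..norm (y t x)} (F (norm x)) = t) \<and>
      (\<forall>z\<ge>norm x. 2 * (E0 U g h (norm x) - Vpot U h z (norm x)) > 0) \<and>
      (\<forall>a b. norm x \<le> a \<and> a < b \<longrightarrow> integral {norm x..a} (F (norm x)) < integral {norm x..b} (F (norm x)))"
    if x: "x \<in> \<Lambda>" for x
  proof -
    obtain y' where y0: "y 0 x = x" and ys: "\<And>t. t \<ge> 0 \<Longrightarrow> y t x \<noteq> 0 \<and>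
           ((\<lambda>s. y s x) has_vector_derivative y' t) (at t within {0..}) \<and>
           (y' has_vector_derivative central_force U (y t x)) (at t within {0..})"
      using solves x by blast
    obtain \<phi> where \<phi>c: "continuous_on {0..} \<phi>" and pol: "\<And>t. t \<ge> 0 \<Longrightarrow> y t x = polar_pt (norm (y t x)) (\<phi> t)"
      and dn: "((\<lambda>t. norm (y t x)) has_real_derivative g (norm x)) (at 0 within {0..})"
      and d\<phi>: "(\<phi> has_real_derivative h (norm x)) (at 0 within {0..})"
      using init_vel x by blast
    define Y1 where "Y1 = (\<lambda>t. y t x $ 1)"
    define Y2 where "Y2 = (\<lambda>t. y t x $ 2)"
    define V1 where "V1 = (\<lambda>t. y' t $ 1)"
    define V2 where "V2 = (\<lambda>t. y' t $ 2)"
    define r0 where "r0 = norm x"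
    define p0 where "p0 = \<phi> 0"
    have nrm: "norm (y t x) = sqrt ((Y1 t)\<^sup>2 + (Y2 t)\<^sup>2)" for t unfolding Y1_def Y2_def by (rule norm2)
    have dY1: "(Y1 has_real_derivative V1 t) (at t within {0..})" if "t \<ge> 0" for t
      unfolding Y1_def V1_def using ys[OF that] by (intro comp_deriv) blast
    have dY2: "(Y2 has_real_derivative V2 t) (at t within {0..})" if "t \<ge> 0" for t
      unfolding Y2_def V2_def using ys[OF that] by (intro comp_deriv) blast
    have dV1: "(V1 has_real_derivative (- deriv U (sqrt ((Y1 t)\<^sup>2 + (Y2 t)\<^sup>2)) / sqrt ((Y1 t)\<^sup>2 + (Y2 t)\<^sup>2)) * Y1 t) (at t within {0..})"
      if "t \<ge> 0" for t
    proof -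
      have "(V1 has_real_derivative central_force U (y t x) $ 1) (at t within {0..})"
        unfolding V1_def using ys[OF that] by (intro comp_deriv) blast
      moreover have "y t x $ 1 = Y1 t" by (simp add: Y1_def)
      ultimately show ?thesis unfolding central_force_def nrm by (simp add: mult.commute)
    qed
    have dV2: "(V2 has_real_derivative (- deriv U (sqrt ((Y1 t)\<^sup>2 + (Y2 t)\<^sup>2)) / sqrt ((Y1 t)\<^sup>2 + (Y2 t)\<^sup>2)) * Y2 t) (at t within {0..})"
      if "t \<ge> 0" for t
    proof -
      have "(V2 has_real_derivative central_force U (y t x) $ 2) (at t within {0..})"
        unfolding V2_def using ys[OF that] by (intro comp_deriv) blast
      moreover have "y t x $ 2 = Y2 t" by (simp add: Y2_def)
      ultimately show ?thesis unfolding central_force_def nrm by (simp add: mult.commute)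
    qed
    have nz: "sqrt ((Y1 t)\<^sup>2 + (Y2 t)\<^sup>2) > 0" if "t \<ge> 0" for t
      using ys[OF that] unfolding nrm[symmetric] by simp
    have pol1: "Y1 t = norm (y t x) * cos (\<phi> t)" "Y2 t = norm (y t x) * sin (\<phi> t)" if "t \<ge> 0" for t
      unfolding Y1_def Y2_def by (subst pol[OF that], simp add: polar_pt_def)+
    have i1: "Y1 0 = r0 * cos p0" and i2: "Y2 0 = r0 * sin p0"
      using pol1[of 0] y0 unfolding r0_def p0_def by auto
    have e1: "((\<lambda>t. norm (y t x) * cos (\<phi> t)) has_real_derivative g r0 * cos p0 - r0 * h r0 * sin p0) (at 0 within {0..})"
      using dn d\<phi> unfolding r0_def p0_def
      by (auto intro!: derivative_eq_intros simp: y0 algebra_simps)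
    have e2: "((\<lambda>t. norm (y t x) * sin (\<phi> t)) has_real_derivative g r0 * sin p0 + r0 * h r0 * cos p0) (at 0 within {0..})"
      using dn d\<phi> unfolding r0_def p0_def
      by (auto intro!: derivative_eq_intros simp: y0 algebra_simps)
    have "(Y1 has_real_derivative g r0 * cos p0 - r0 * h r0 * sin p0) (at 0 within {0..})"
      by (rule has_field_derivative_transform_within[OF e1, of 1]) (use pol1 in auto)
    then have i3: "V1 0 = g r0 * cos p0 - r0 * h r0 * sin p0"
      using has_field_derivative_unique[OF dY1[of 0] _ at0_nonbot[of 0]] by auto
    have "(Y2 has_real_derivative g r0 * sin p0 + r0 * h r0 * cos p0) (at 0 within {0..})"
      by (rule has_field_derivative_transform_within[OF e2, of 1]) (use pol1 in auto)
    then have i4: "V2 0 = g r0 * sin p0 + r0 * h r0 * cos p0"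
      using has_field_derivative_unique[OF dY2[of 0] _ at0_nonbot[of 0]] by auto
    have r0pos: "r0 > 0" and r0R: "R1 < r0" "r0 < R2" using Lam_annulus x R_pos unfolding r0_def by auto
    have g0: "g r0 > 0" using g_pos x unfolding r0_def by auto
    have Mc: "- deriv U z + (r0\<^sup>2 * h r0)\<^sup>2 / z ^ 3 \<ge> 0" if "z \<ge> r0" for z
      using M_cond r0R that unfolding Mmom_def by auto
    note P = particle[OF dY1 dY2 dV1 dV2 nz dU i1 i2 i3 i4 r0pos g0 Mc]
    have Qe: "(g r0)\<^sup>2 / 2 + U r0 + r0\<^sup>2 * (h r0)\<^sup>2 / 2 - (U z + r0 ^ 4 * (h r0)\<^sup>2 / (2 * z\<^sup>2)) = E0 U g h r0 - Vpot U h z r0" for z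
      by (simp add: E0_def Vpot_def)
    note P' = P[unfolded Qe nrm[symmetric]]
    have A: "\<forall>t\<ge>0. Y1 t * V2 t - Y2 t * V1 t = r0\<^sup>2 * h r0 \<and> r0 \<le> norm (y t x) \<and>
           Y1 t * V1 t + Y2 t * V2 t = norm (y t x) * sqrt (2 * (E0 U g h r0 - Vpot U h (norm (y t x)) r0)) \<and>
           integral {r0..norm (y t x)} (\<lambda>z. 1 / sqrt (2 * (E0 U g h r0 - Vpot U h z r0))) = t"
      by (rule P'(1)) auto
    have B: "\<forall>z\<ge>r0. 0 < 2 * (E0 U g h r0 - Vpot U h z r0)" by (rule P'(2)) auto
    have C: "\<forall>a b. r0 \<le> a \<and> a < b \<longrightarrow>
           integral {r0..a} (\<lambda>z. 1 / sqrt (2 * (E0 U g h r0 - Vpot U h z r0)))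
           < integral {r0..b} (\<lambda>z. 1 / sqrt (2 * (E0 U g h r0 - Vpot U h z r0)))" by (rule P'(3)) auto
    show ?thesis
      apply (rule exI[of _ V1], rule exI[of _ V2])
      using A B C dY1 dY2 unfolding F_def r0_def Y1_def Y2_def by auto
  qed
  have conn: "s \<in> norm ` \<Lambda>" if "a \<in> norm ` \<Lambda>" "b \<in> norm ` \<Lambda>" "a \<le> s" "s \<le> b" for a b s
  proof -
    obtain S where S: "open S" "connected S" "\<Lambda> = closure S" using Lam_closure by blast
    have "connected \<Lambda>" using S connected_imp_connected_closure by blast
    then have "connected (norm ` \<Lambda>)" by (rule connected_continuous_image[rotated]) (intro continuous_intros)
    then have "is_interval (norm ` \<Lambda>)" by (simp add: is_interval_connected_1)
    then show ?thesis using that unfolding is_interval_1 by blast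
  qed
  have diffrad: "norm (y \<tau> xa) \<noteq> norm (y \<tau> xb)"
    if xab: "xa \<in> \<Lambda>" "xb \<in> \<Lambda>" "norm xa < norm xb" and \<tau>: "\<tau> \<ge> 0" for xa xb \<tau>
  proof
    assume eq: "norm (y \<tau> xa) = norm (y \<tau> xb)"
    define a where "a = norm xa"
    define b where "b = norm xb"
    define z where "z = norm (y \<tau> xb)"
    have ta: "integral {a..z} (F a) = \<tau>" and za: "z \<ge> a"
      using PR[OF xab(1)] \<tau> eq unfolding a_def z_def by auto
    have tb: "integral {b..z} (F b) = \<tau>" and zb: "z \<ge> b"
      using PR[OF xab(2)] \<tau> unfolding b_def z_def by auto
    have ab: "a < b" using xab unfolding a_def b_def by simp
    have "z \<noteq> b"
    proof
      assume "z = b"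
      then have "\<tau> = 0" using tb by simp
      then have "z = a" using eq solves xab(1) unfolding z_def a_def by auto
      then show False using \<open>z = b\<close> ab by simp
    qed
    then have bz: "b < z" using zb by simp
    have "integral {a..z} (F a) > integral {b..z} (F b)"
    proof (rule DERIV_neg_imp_decreasing[OF ab])
      fix s assume s: "a \<le> s" "s \<le> b"
      have "s \<in> norm ` \<Lambda>" by (rule conn[of a b]) (use xab s in \<open>auto simp: a_def b_def\<close>)
      then obtain xs where xs: "xs \<in> \<Lambda>" "s = norm xs" by blast
      have sR: "R1 < s" "s < R2" using Lam_annulus xs by auto
      have s0: "0 < s" using sR R_pos by simp
      have gs: "g s > 0" using g_pos xs by auto
      have dg: "(g has_real_derivative deriv g s) (at s)" and dh: "(h has_real_derivative deriv h s) (at s)"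
        using gh_diff sR by (auto simp: DERIV_deriv_iff_real_differentiable)
      have pos: "2 * (E0 U g h s - Vpot U h t s) > 0" if "s \<le> t" "t \<le> z" for t
        using PR[OF xs(1)] that xs(2) by auto
      have "((\<lambda>s. integral {s..z} (\<lambda>t. 1 / sqrt (2 * (E0 U g h s - Vpot U h t s)))) has_real_derivative
         (- 1 / g s + integral {s..z} (\<lambda>t. deriv (\<lambda>s. 1 / sqrt (2 * (E0 U g h s - Vpot U h t s))) s))) (at s)"
        by (rule Tderiv_conc[OF s0 _ dU dg dh gs pos]) (use s bz in auto)
      moreover have "- 1 / g s + integral {s..z} (\<lambda>t. deriv (\<lambda>s. 1 / sqrt (2 * (E0 U g h s - Vpot U h t s))) s) < 0"
        using int_cond[rule_format, of s z] sR s bz by auto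
      ultimately show "\<exists>y. ((\<lambda>s. integral {s..z} (F s)) has_real_derivative y) (at s) \<and> y < 0"
        unfolding F_def by blast
    qed
    then show False using ta tb by simp
  qed
  have samerad: "y \<tau> xa \<noteq> y \<tau> xb"
    if xab: "xa \<in> \<Lambda>" "xb \<in> \<Lambda>" "xa \<noteq> xb" "norm xa = norm xb" and \<tau>: "\<tau> \<ge> 0" for xa xb \<tau>
  proof
    assume coll: "y \<tau> xa = y \<tau> xb"
    define r where "r = norm xa"
    obtain VA1 VA2 where PA: "\<forall>t\<ge>0. ((\<lambda>t. y t xa $ 1) has_real_derivative VA1 t) (at t within {0..}) \<and>
        ((\<lambda>t. y t xa $ 2) has_real_derivative VA2 t) (at t within {0..}) \<and>
        y t xa $ 1 * VA2 t - y t xa $ 2 * VA1 t = r\<^sup>2 * h r \<and>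
        norm (y t xa) \<ge> r \<and>
        y t xa $ 1 * VA1 t + y t xa $ 2 * VA2 t = norm (y t xa) * sqrt (2 * (E0 U g h r - Vpot U h (norm (y t xa)) r)) \<and>
        integral {r..norm (y t xa)} (F r) = t"
      and CA: "\<forall>a b. r \<le> a \<and> a < b \<longrightarrow> integral {r..a} (F r) < integral {r..b} (F r)"
      using PR[OF xab(1)] unfolding r_def by blast
    obtain VB1 VB2 where PB: "\<forall>t\<ge>0. ((\<lambda>t. y t xb $ 1) has_real_derivative VB1 t) (at t within {0..}) \<and>
        ((\<lambda>t. y t xb $ 2) has_real_derivative VB2 t) (at t within {0..}) \<and>
        y t xb $ 1 * VB2 t - y t xb $ 2 * VB1 t = r\<^sup>2 * h r \<and>
        norm (y t xb) \<ge> r \<and>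
        y t xb $ 1 * VB1 t + y t xb $ 2 * VB2 t = norm (y t xb) * sqrt (2 * (E0 U g h r - Vpot U h (norm (y t xb)) r)) \<and>
        integral {r..norm (y t xb)} (F r) = t"
      using PR[OF xab(2)] xab(4) unfolding r_def by auto
    have req: "norm (y t xa) = norm (y t xb)" if t: "t \<ge> 0" for t
    proof -
      have 1: "integral {r..norm (y t xa)} (F r) = t" "r \<le> norm (y t xa)" using PA t by auto
      have 2: "integral {r..norm (y t xb)} (F r) = t" "r \<le> norm (y t xb)" using PB t by auto
      show ?thesis
      proof (rule linorder_cases[of "norm (y t xa)" "norm (y t xb)"])
        assume "norm (y t xa) < norm (y t xb)"
        then show ?thesis using CA 1 2 by force
      next
        assume "norm (y t xb) < norm (y t xa)"
        then show ?thesis using CA 1 2 by force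
      qed
    qed
    define YA1 where "YA1 = (\<lambda>t. y t xa $ 1)"
    define YA2 where "YA2 = (\<lambda>t. y t xa $ 2)"
    define YB1 where "YB1 = (\<lambda>t. y t xb $ 1)"
    define YB2 where "YB2 = (\<lambda>t. y t xb $ 2)"
    define q where "q = (\<lambda>t. YA1 t * YB1 t + YA2 t * YB2 t)"
    define N where "N = (\<lambda>t. YA1 t * YA1 t + YA2 t * YA2 t)"
    have NA: "N t = (norm (y t xa))\<^sup>2" for t unfolding N_def YA1_def YA2_def norm2 by (simp add: power2_eq_square)
    have NB: "YB1 t * YB1 t + YB2 t * YB2 t = (norm (y t xb))\<^sup>2" for t unfolding YB1_def YB2_def norm2 by (simp add: power2_eq_square)
    have rpos: "r > 0" using Lam_annulus xab(1) R_pos unfolding r_def by auto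
    have dq: "((\<lambda>t. q t / N t) has_real_derivative 0) (at t within {0..})" if t: "t \<ge> 0" for t
    proof -
      have dA1: "(YA1 has_real_derivative VA1 t) (at t within {0..})" and dA2: "(YA2 has_real_derivative VA2 t) (at t within {0..})"
        and dB1: "(YB1 has_real_derivative VB1 t) (at t within {0..})" and dB2: "(YB2 has_real_derivative VB2 t) (at t within {0..})"
        using PA PB t unfolding YA1_def YA2_def YB1_def YB2_def by auto
      have Nt: "N t \<noteq> 0" using NA[of t] PA t rpos by auto
      have h1: "YA1 t * VA1 t + YA2 t * VA2 t = YB1 t * VB1 t + YB2 t * VB2 t"
        using PA PB t req[OF t] unfolding YA1_def YA2_def YB1_def YB2_def by auto
      have h2: "YA1 t * VA2 t - YA2 t * VA1 t = YB1 t * VB2 t - YB2 t * VB1 t"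
        using PA PB t unfolding YA1_def YA2_def YB1_def YB2_def by auto
      have h3: "YA1 t * YA1 t + YA2 t * YA2 t = YB1 t * YB1 t + YB2 t * YB2 t"
        using NA[of t] NB[of t] req[OF t] unfolding N_def by simp
      have num: "(VA1 t * YB1 t + VB1 t * YA1 t + (VA2 t * YB2 t + VB2 t * YA2 t)) * (YA1 t * YA1 t + YA2 t * YA2 t) -
          (YA1 t * YB1 t + YA2 t * YB2 t) * (VA1 t * YA1 t + VA1 t * YA1 t + (VA2 t * YA2 t + VA2 t * YA2 t)) = 0"
        using h1 h2 h3 by algebra
      have num2: "(VA1 t * YB1 t + VB1 t * YA1 t + (VA2 t * YB2 t + VB2 t * YA2 t)) * (YA1 t * YA1 t + YA2 t * YA2 t) =
          (YA1 t * YB1 t + YA2 t * YB2 t) * (2 * (VA1 t * YA1 t) + 2 * (VA2 t * YA2 t))"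
        using num by algebra
      show ?thesis unfolding q_def N_def
        by (rule DERIV_cong[OF DERIV_divide[OF DERIV_add[OF DERIV_mult[OF dA1 dB1] DERIV_mult[OF dA2 dB2]]
              DERIV_add[OF DERIV_mult[OF dA1 dA1] DERIV_mult[OF dA2 dA2]] Nt[unfolded N_def]]]) (simp add: num2)
    qed
    have "q \<tau> / N \<tau> = q 0 / N 0" by (rule const0[OF dq \<tau>])
    moreover have "q \<tau> = N \<tau>" using coll unfolding q_def N_def YA1_def YA2_def YB1_def YB2_def by simp
    moreover have "N \<tau> \<noteq> 0" using NA[of \<tau>] PA \<tau> rpos by auto
    moreover have "N 0 = r\<^sup>2" using NA[of 0] solves xab(1) unfolding r_def by auto
    moreover have NB0: "YB1 0 * YB1 0 + YB2 0 * YB2 0 = r\<^sup>2" using NB[of 0] solves xab unfolding r_def by auto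
    ultimately have q0: "q 0 = r\<^sup>2" using rpos by (simp add: field_simps)
    have "(YA1 0 - YB1 0)\<^sup>2 + (YA2 0 - YB2 0)\<^sup>2 = N 0 + (YB1 0 * YB1 0 + YB2 0 * YB2 0) - 2 * q 0"
      unfolding q_def N_def by (simp add: power2_eq_square algebra_simps)
    also have "\<dots> = 0" using q0 NB0 \<open>N 0 = r\<^sup>2\<close> by simp
    finally have "YA1 0 = YB1 0" "YA2 0 = YB2 0" by (auto simp: sum_power2_eq_zero_iff)
    then have "xa $ 1 = xb $ 1" "xa $ 2 = xb $ 2" using solves xab unfolding YA1_def YA2_def YB1_def YB2_def by auto
    then have "xa = xb" by (simp add: vec_eq_iff forall_2)
    then show False using xab(3) by simp
  qed
  show ?thesis
  proof (intro allI impI ballI)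
    fix t :: real and x1 x2 assume t: "t \<ge> 0" and x: "x1 \<in> \<Lambda>" "x2 \<in> \<Lambda>" "x1 \<noteq> x2"
    show "y t x1 \<noteq> y t x2"
    proof (rule linorder_cases[of "norm x1" "norm x2"])
      assume "norm x1 < norm x2"
      then show ?thesis using diffrad[OF x(1,2) _ t] by auto
    next
      assume "norm x1 = norm x2"
      then show ?thesis using samerad[OF x _ t] by auto
    next
      assume "norm x2 < norm x1"
      then show ?thesis using diffrad[OF x(2,1) _ t] by metis
    qed
  qed
qed


end
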